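(* Let $(A,B)$ be controllable. For any $N$, any $Q_t\in\mathcal Q$, $R_t\in\mathcal R$ ($0\le t\le N-1$) and $Q_N\in\mathcal P$, the matrices defined by $P_N=Q_N$ and, for $t=N-1,\dots,0$, $P_t=Q_t+A^\top\big(P_{t+1}-P_{t+1}B(R_t+B^\top P_{t+1}B)^{-1}B^\top P_{t+1}\big)A$ satisfy $P_t\in\mathcal P$ for all $0\le t\le N$.
   Context: Fix $\mu_f,\mu_g>0$, $0<l_f,l_g<\infty$. $P^e(Q,R)$ denotes the positive definite solution of the DARE $P=Q+A^\top(P-PB(B^\top PB+R)^{-1}B^\top P)A$. $\mathcal Q=\{Q:\mu_fI_n\le Q\le l_fI_n\}$, $\mathcal R=\{R:\mu_gI_m\le R\le l_gI_m\}$, $\bar P=P^e(l_fI_n,l_gI_m)$, $\underline P=P^e(\mu_fI_n,\mu_gI_m)$, $\mathcal P=\{P:\underline P\le P\le\bar P\}$ (Loewner order). *)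

theory Defs
  imports "HOL-Analysis.Analysis"
begin

(* Matrix power A^k (the componentwise '^' on vec is not matrix power) *)
primrec matpow :: "real^'n^'n \<Rightarrow> nat \<Rightarrow> real^'n^'n" where
  "matpow A 0 = mat 1"
| "matpow A (Suc k) = A ** matpow A k"

(* Kalman controllability: the controllability matrix [B, AB, ..., A^(n-1) B]
   has rank n, i.e. its columns span R^n *)
definition controllable :: "real^'n^'n \<Rightarrow> real^'m^'n \<Rightarrow> bool" where
  "controllable A B \<longleftrightarrow>
     span (\<Union>k\<in>{..<CARD('n)}. columns (matpow A k ** B)) = UNIV"

definition psd :: "real^'n^'n \<Rightarrow> bool" where
  "psd M \<longleftrightarrow> transpose M = M \<and> (\<forall>x. 0 \<le> x \<bullet> (M *v x))"

definition pos_def :: "real^'n^'n \<Rightarrow> bool" where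
  "pos_def M \<longleftrightarrow> transpose M = M \<and> (\<forall>x. x \<noteq> 0 \<longrightarrow> 0 < x \<bullet> (M *v x))"

definition loewner_le :: "real^'n^'n \<Rightarrow> real^'n^'n \<Rightarrow> bool" where
  "loewner_le X Y \<longleftrightarrow> psd (Y - X)"

definition riccati :: "real^'n^'n \<Rightarrow> real^'m^'n \<Rightarrow> real^'n^'n \<Rightarrow> real^'m^'m
    \<Rightarrow> real^'n^'n \<Rightarrow> real^'n^'n" where
  "riccati A B Q R P = Q + transpose A **
     (P - P ** B ** matrix_inv (transpose B ** P ** B + R) ** transpose B ** P) ** A"

definition dare_sol :: "real^'n^'n \<Rightarrow> real^'m^'n \<Rightarrow> real^'n^'n \<Rightarrow> real^'m^'m
    \<Rightarrow> real^'n^'n" where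
  "dare_sol A B Q R = (THE P. pos_def P \<and> P = riccati A B Q R P)"

definition Qset :: "real \<Rightarrow> real \<Rightarrow> (real^'n^'n) set" where
  "Qset muf lf = {Q. loewner_le (muf *\<^sub>R mat 1) Q \<and> loewner_le Q (lf *\<^sub>R mat 1)}"

definition Rset :: "real \<Rightarrow> real \<Rightarrow> (real^'m^'m) set" where
  "Rset mug lg = {R. loewner_le (mug *\<^sub>R mat 1) R \<and> loewner_le R (lg *\<^sub>R mat 1)}"

definition Pset :: "real^'n^'n \<Rightarrow> real^'m^'n \<Rightarrow> real \<Rightarrow> real \<Rightarrow> real \<Rightarrow> real
    \<Rightarrow> (real^'n^'n) set" where
  "Pset A B muf lf mug lg =
     {P. loewner_le (dare_sol A B (muf *\<^sub>R mat 1) (mug *\<^sub>R mat 1)) P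
       \<and> loewner_le P (dare_sol A B (lf *\<^sub>R mat 1) (lg *\<^sub>R mat 1))}"

end

theory Submission
  imports Defs
begin

lemma transpose_add': "transpose (X + Y) = transpose X + transpose (Y::real^'n^'m)"
  by (simp add: transpose_def vec_eq_iff)
lemma transpose_diff': "transpose (X - Y) = transpose X - transpose (Y::real^'n^'m)"
  by (simp add: transpose_def vec_eq_iff)

lemma inner_mv: "(x::real^'n) \<bullet> (M *v y) = (transpose M *v x) \<bullet> y"
  by (simp add: transpose_matrix_vector dot_lmul_matrix)

lemma inner_tmv: "(x::real^'n) \<bullet> (transpose M *v y) = (M *v x) \<bullet> y"
  by (metis inner_mv transpose_transpose)

lemma inner_mv_sym: "transpose M = M \<Longrightarrow> (x::real^'n) \<bullet> (M *v y) = y \<bullet> (M *v x)"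
  by (metis inner_mv inner_commute)

lemma quad_scaled_id: "x \<bullet> ((c *\<^sub>R mat 1) *v x) = c * (norm (x::real^'n))^2"
  by (simp add: scaleR_matrix_vector_assoc[symmetric] power2_norm_eq_inner)

lemma loewner_iff:
  "loewner_le X Y \<longleftrightarrow> transpose (Y - X) = Y - X \<and> (\<forall>x. x \<bullet> (X *v x) \<le> x \<bullet> (Y *v x))"
  by (simp add: loewner_le_def psd_def matrix_vector_mult_diff_rdistrib inner_diff_right)

lemma sym_zero:
  fixes S :: "real^'n^'n"
  assumes "transpose S = S" "\<forall>x. x \<bullet> (S *v x) = 0"
  shows "S = 0"
proof -
  have "x \<bullet> (S *v y) = 0" for x y
  proof -
    have "(x+y) \<bullet> (S *v (x+y)) = x \<bullet> (S *v x) + x \<bullet> (S *v y) + y \<bullet> (S *v x) + y \<bullet> (S *v y)"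
      by (simp add: matrix_vector_right_distrib inner_add_left inner_add_right)
    moreover have "y \<bullet> (S *v x) = x \<bullet> (S *v y)" using inner_mv_sym[OF assms(1)] by metis
    ultimately show ?thesis using assms(2) by (metis add.right_neutral add_0 mult_2 mult_eq_0_iff zero_neq_numeral)
  qed
  then have "S *v y = 0" for y by (metis inner_eq_zero_iff)
  then show ?thesis by (simp add: matrix_eq)
qed

lemma quad_eq_imp_eq:
  fixes X Y :: "real^'n^'n"
  assumes "transpose X = X" "transpose Y = Y" "\<forall>x. x \<bullet> (X *v x) = x \<bullet> (Y *v x)"
  shows "X = Y"
proof -
  have "X - Y = 0"
    by (rule sym_zero) (simp_all add: assms transpose_diff' matrix_vector_mult_diff_rdistrib inner_diff_right)
  then show ?thesis by simp
qed

lemma abs_bound: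
  fixes M :: "real^'n^'m"
  shows "\<bar>x \<bullet> (M *v y)\<bar> \<le> (\<Sum>i\<in>UNIV. \<Sum>j\<in>UNIV. \<bar>M$i$j\<bar>) * norm x * norm y"
proof -
  have "x \<bullet> (M *v y) = (\<Sum>i\<in>UNIV. \<Sum>j\<in>UNIV. x$i * M$i$j * y$j)"
    by (simp add: inner_vec_def matrix_vector_mult_def sum_distrib_left mult.assoc)
  also have "\<bar>\<dots>\<bar> \<le> (\<Sum>i\<in>UNIV. \<Sum>j\<in>UNIV. \<bar>x$i * M$i$j * y$j\<bar>)"
    by (rule order_trans[OF sum_abs]) (intro sum_mono sum_abs)
  also have "\<dots> \<le> (\<Sum>i\<in>UNIV. \<Sum>j\<in>UNIV. \<bar>M$i$j\<bar> * (norm x * norm y))"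
  proof (intro sum_mono)
    fix i j
    have h: "\<bar>x$i\<bar> * \<bar>y$j\<bar> \<le> norm x * norm y"
      by (intro mult_mono component_le_norm_cart) auto
    then show "\<bar>x$i * M$i$j * y$j\<bar> \<le> \<bar>M$i$j\<bar> * (norm x * norm y)"
    proof -
      have "\<bar>x$i * M$i$j * y$j\<bar> = \<bar>M$i$j\<bar> * (\<bar>x$i\<bar> * \<bar>y$j\<bar>)" by (simp add: abs_mult)
      also have "\<dots> \<le> \<bar>M$i$j\<bar> * (norm x * norm y)" using h by (intro mult_left_mono) auto
      finally show ?thesis .
    qed
  qed
  also have "\<dots> = (\<Sum>i\<in>UNIV. \<Sum>j\<in>UNIV. \<bar>M$i$j\<bar>) * norm x * norm y"
    by (simp add: sum_distrib_right mult.assoc)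
  finally show ?thesis .
qed

lemma norm_mv_bound:
  fixes M :: "real^'n^'m"
  shows "norm (M *v y) \<le> (\<Sum>i\<in>UNIV. \<Sum>j\<in>UNIV. \<bar>M$i$j\<bar>) * norm y"
proof (cases "M *v y = 0")
  case True then show ?thesis by (simp add: sum_nonneg)
next
  case False
  have "norm (M *v y) ^ 2 \<le> (\<Sum>i\<in>UNIV. \<Sum>j\<in>UNIV. \<bar>M$i$j\<bar>) * norm (M *v y) * norm y"
    using abs_bound[of "M *v y" M y] by (simp add: power2_norm_eq_inner)
  then show ?thesis using False by (simp add: power2_eq_square mult.commute mult.left_commute)
qed

lemma pd_inv:
  fixes M :: "real^'n^'n"
  assumes s: "transpose M = M" and p: "\<forall>x. x \<noteq> 0 \<longrightarrow> 0 < x \<bullet> (M *v x)"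
  shows "M ** matrix_inv M = mat 1" "matrix_inv M ** M = mat 1"
    "transpose (matrix_inv M) = matrix_inv M"
proof -
  have "\<forall>x. M *v x = 0 \<longrightarrow> x = 0" using p by force
  then have "\<exists>B. B ** M = mat 1" by (simp add: matrix_left_invertible_ker)
  then have "invertible M" by (simp add: invertible_left_inverse)
  then have both: "M ** matrix_inv M = mat 1 \<and> matrix_inv M ** M = mat 1"
    unfolding invertible_def matrix_inv_def by (rule someI_ex)
  then show 1: "M ** matrix_inv M = mat 1" and 2: "matrix_inv M ** M = mat 1" by auto
  have "transpose (matrix_inv M) ** M = mat 1"
    by (metis 1 s matrix_transpose_mul transpose_mat)
  then have "transpose (matrix_inv M) = transpose (matrix_inv M) ** (M ** matrix_inv M)"
    using 1 by simp
  also have "\<dots> = matrix_inv M"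
    by (simp add: matrix_mul_assoc \<open>transpose (matrix_inv M) ** M = mat 1\<close>)
  finally show "transpose (matrix_inv M) = matrix_inv M" .
qed

lemma ric_identity:
  fixes A :: "real^'n^'n" and B :: "real^'m^'n" and P Q :: "real^'n^'n" and R :: "real^'m^'m"
  defines "M \<equiv> transpose B ** P ** B + R"
  assumes sP: "transpose P = P" and sR: "transpose R = R"
    and inv1: "M ** matrix_inv M = mat 1"
    and sMi: "transpose (matrix_inv M) = matrix_inv M"
  shows "x \<bullet> (Q *v x) + u \<bullet> (R *v u) + (A *v x + B *v u) \<bullet> (P *v (A *v x + B *v u))
       = x \<bullet> (riccati A B Q R P *v x)
         + (u + matrix_inv M *v (transpose B *v (P *v (A *v x)))) \<bullet> (M *v (u + matrix_inv M *v (transpose B *v (P *v (A *v x)))))"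
proof -
  define Mi where "Mi = matrix_inv M"
  define v where "v = A *v x"
  define z where "z = transpose B *v (P *v v)"
  define w where "w = Mi *v z"
  have sM: "transpose M = M"
    by (simp add: M_def transpose_add' matrix_transpose_mul sP sR matrix_mul_assoc)
  have Mw: "M *v w = z" by (simp add: w_def Mi_def matrix_vector_mul_assoc inv1)
  have r1: "x \<bullet> (riccati A B Q R P *v x) = x \<bullet> (Q *v x) + v \<bullet> (P *v v) - z \<bullet> w"
  proof -
    have "x \<bullet> (riccati A B Q R P *v x) = x \<bullet> (Q *v x) +
       x \<bullet> (transpose A *v ((P - P ** B ** Mi ** transpose B ** P) *v v))"
      by (simp add: riccati_def M_def Mi_def v_def matrix_vector_mult_add_rdistrib
          inner_add_right matrix_vector_mul_assoc[symmetric])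
    also have "x \<bullet> (transpose A *v ((P - P ** B ** Mi ** transpose B ** P) *v v))
        = v \<bullet> ((P - P ** B ** Mi ** transpose B ** P) *v v)"
      unfolding v_def by (rule inner_tmv)
    also have "\<dots> = v \<bullet> (P *v v) - v \<bullet> (P *v (B *v w))"
      by (simp add: matrix_vector_mult_diff_rdistrib inner_diff_right w_def z_def
          matrix_vector_mul_assoc matrix_mul_assoc)
    also have "v \<bullet> (P *v (B *v w)) = z \<bullet> w"
    proof -
      have "z \<bullet> w = w \<bullet> (transpose B *v (P *v v))" by (simp add: z_def inner_commute del: transpose_matrix_vector)
      also have "\<dots> = (B *v w) \<bullet> (P *v v)" by (rule inner_tmv)
      also have "\<dots> = v \<bullet> (P *v (B *v w))" by (rule inner_mv_sym[OF sP])
      finally show ?thesis by simp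
    qed
    finally show ?thesis by simp
  qed
  have r2: "(u + w) \<bullet> (M *v (u + w)) = u \<bullet> (R *v u) + (B *v u) \<bullet> (P *v (B *v u)) + 2 * (u \<bullet> z) + z \<bullet> w"
  proof -
    have a: "(u + w) \<bullet> (M *v (u + w)) = u \<bullet> (M *v u) + u \<bullet> (M *v w) + w \<bullet> (M *v u) + w \<bullet> (M *v w)"
      by (simp add: matrix_vector_right_distrib inner_add_left inner_add_right)
    have b: "w \<bullet> (M *v u) = u \<bullet> z" using inner_mv_sym[OF sM, of w u] Mw by simp
    have c: "u \<bullet> (M *v u) = u \<bullet> (R *v u) + (B *v u) \<bullet> (P *v (B *v u))"
      by (simp add: M_def matrix_vector_mult_add_rdistrib inner_add_right inner_tmv
          matrix_vector_mul_assoc[symmetric] del: transpose_matrix_vector)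
    show ?thesis using a b c Mw by (simp add: inner_commute)
  qed
  have r3: "(v + B *v u) \<bullet> (P *v (v + B *v u)) = v \<bullet> (P *v v) + 2 * (u \<bullet> z) + (B *v u) \<bullet> (P *v (B *v u))"
  proof -
    have a: "(v + B *v u) \<bullet> (P *v (v + B *v u)) = v \<bullet> (P *v v) + v \<bullet> (P *v (B *v u)) + (B *v u) \<bullet> (P *v v) + (B *v u) \<bullet> (P *v (B *v u))"
      by (simp add: matrix_vector_right_distrib inner_add_left inner_add_right)
    have b: "(B *v u) \<bullet> (P *v v) = u \<bullet> z" unfolding z_def by (rule inner_tmv[symmetric])
    have c: "v \<bullet> (P *v (B *v u)) = u \<bullet> z" using inner_mv_sym[OF sP, of v "B *v u"] b by simp
    show ?thesis using a b c by simp
  qed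
  have "matrix_inv M *v (transpose B *v (P *v (A *v x))) = w" by (simp add: w_def Mi_def z_def v_def)
  then show ?thesis using r1 r2 r3 by (simp add: v_def[symmetric] inner_commute)
qed

lemma pd_nonneg: "\<forall>u. u \<noteq> 0 \<longrightarrow> 0 < u \<bullet> ((R::real^'m^'m) *v u) \<Longrightarrow> 0 \<le> u \<bullet> (R *v u)"
  by (cases "u = 0") (auto intro: less_imp_le)

locale ricsetup =
  fixes A :: "real^'n^'n" and B :: "real^'m^'n" and P Q :: "real^'n^'n" and R :: "real^'m^'m"
  assumes sP: "transpose P = P" and pP: "\<forall>x. 0 \<le> x \<bullet> (P *v x)"
    and sR: "transpose R = R" and pR: "\<forall>u. u \<noteq> 0 \<longrightarrow> 0 < u \<bullet> (R *v u)"
    and sQ: "transpose Q = Q"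
begin

definition "MM = transpose B ** P ** B + R"

lemma MM_sym: "transpose MM = MM"
  by (simp add: MM_def transpose_add' matrix_transpose_mul sP sR matrix_mul_assoc)

lemma MM_pd: "\<forall>u. u \<noteq> 0 \<longrightarrow> 0 < u \<bullet> (MM *v u)"
proof (intro allI impI)
  fix u :: "real^'m" assume "u \<noteq> 0"
  have "u \<bullet> (MM *v u) = (B *v u) \<bullet> (P *v (B *v u)) + u \<bullet> (R *v u)"
    by (simp add: MM_def matrix_vector_mult_add_rdistrib inner_add_right inner_tmv
          matrix_vector_mul_assoc[symmetric] del: transpose_matrix_vector)
  moreover have "0 \<le> (B *v u) \<bullet> (P *v (B *v u))" using pP by blast
  moreover have "0 < u \<bullet> (R *v u)" using pR \<open>u \<noteq> 0\<close> by blast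
  ultimately show "0 < u \<bullet> (MM *v u)" by linarith
qed

lemmas MM_inv = pd_inv[OF MM_sym MM_pd]

lemma ident: "x \<bullet> (Q *v x) + u \<bullet> (R *v u) + (A *v x + B *v u) \<bullet> (P *v (A *v x + B *v u))
       = x \<bullet> (riccati A B Q R P *v x)
         + (u + matrix_inv MM *v (transpose B *v (P *v (A *v x)))) \<bullet> (MM *v (u + matrix_inv MM *v (transpose B *v (P *v (A *v x)))))"
  using ric_identity[OF sP sR, of B, folded MM_def, OF MM_inv(1) MM_inv(3)] by blast

lemma ric_le: "x \<bullet> (riccati A B Q R P *v x) \<le> x \<bullet> (Q *v x) + u \<bullet> (R *v u) + (A *v x + B *v u) \<bullet> (P *v (A *v x + B *v u))"
  using ident[of x u] pd_nonneg[OF MM_pd] by (metis le_add_same_cancel1)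

lemma ric_ex: "\<exists>u. x \<bullet> (riccati A B Q R P *v x) = x \<bullet> (Q *v x) + u \<bullet> (R *v u) + (A *v x + B *v u) \<bullet> (P *v (A *v x + B *v u))"
proof
  let ?u = "- (matrix_inv MM *v (transpose B *v (P *v (A *v x))))"
  show "x \<bullet> (riccati A B Q R P *v x) = x \<bullet> (Q *v x) + ?u \<bullet> (R *v ?u) + (A *v x + B *v ?u) \<bullet> (P *v (A *v x + B *v ?u))"
    using ident[of x ?u] by simp
qed

lemma ric_ge_Q: "x \<bullet> (Q *v x) \<le> x \<bullet> (riccati A B Q R P *v x)"
proof -
  obtain u where "x \<bullet> (riccati A B Q R P *v x) = x \<bullet> (Q *v x) + u \<bullet> (R *v u) + (A *v x + B *v u) \<bullet> (P *v (A *v x + B *v u))"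
    using ric_ex by blast
  moreover have "0 \<le> u \<bullet> (R *v u)" using pd_nonneg[OF pR] .
  moreover have "0 \<le> (A *v x + B *v u) \<bullet> (P *v (A *v x + B *v u))" using pP by blast
  ultimately show ?thesis by linarith
qed

lemma ric_sym: "transpose (riccati A B Q R P) = riccati A B Q R P"
  using MM_inv(3) unfolding MM_def
  by (simp add: riccati_def transpose_add' transpose_diff' matrix_transpose_mul sP sQ sR matrix_mul_assoc)

end

lemma ric_mono:
  assumes r1: "ricsetup P1 Q1 R1" and r2: "ricsetup P2 Q2 R2"
    and Q: "\<forall>x. x \<bullet> (Q1 *v x) \<le> x \<bullet> (Q2 *v x)"
    and R: "\<forall>u. u \<bullet> (R1 *v u) \<le> u \<bullet> (R2 *v u)"
    and P: "\<forall>x. x \<bullet> (P1 *v x) \<le> x \<bullet> (P2 *v x)"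
  shows "x \<bullet> (riccati A B Q1 R1 P1 *v x) \<le> x \<bullet> (riccati A B Q2 R2 P2 *v x)"
proof -
  obtain u where u: "x \<bullet> (riccati A B Q2 R2 P2 *v x) = x \<bullet> (Q2 *v x) + u \<bullet> (R2 *v u) + (A *v x + B *v u) \<bullet> (P2 *v (A *v x + B *v u))"
    using ricsetup.ric_ex[OF r2] by blast
  have "x \<bullet> (riccati A B Q1 R1 P1 *v x) \<le> x \<bullet> (Q1 *v x) + u \<bullet> (R1 *v u) + (A *v x + B *v u) \<bullet> (P1 *v (A *v x + B *v u))"
    using ricsetup.ric_le[OF r1] by blast
  also have "\<dots> \<le> x \<bullet> (Q2 *v x) + u \<bullet> (R2 *v u) + (A *v x + B *v u) \<bullet> (P2 *v (A *v x + B *v u))"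
    using Q R P by (meson add_mono)
  finally show ?thesis using u by simp
qed

primrec traj :: "real^'n^'n \<Rightarrow> real^'m^'n \<Rightarrow> real^'n \<Rightarrow> (nat \<Rightarrow> real^'m) \<Rightarrow> nat \<Rightarrow> real^'n" where
  "traj A B x u 0 = x"
| "traj A B x u (Suc j) = A *v traj A B x u j + B *v u j"

lemma traj_shift: "traj A B x u (Suc j) = traj A B (A *v x + B *v u 0) (\<lambda>i. u (Suc i)) j"
  by (induction j) auto

lemma traj_formula:
  "traj A B x u m = matpow A m *v x + (\<Sum>j<m. (matpow A (m - Suc j) ** B) *v u j)"
proof (induction m)
  case 0 then show ?case by simp
next
  case (Suc m)
  have e: "A *v ((matpow A k ** B) *v w) = (matpow A (Suc k) ** B) *v w" for k w
    by (simp add: matrix_vector_mul_assoc matrix_mul_assoc)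
  have "traj A B x u (Suc m) = A *v (matpow A m *v x) + (\<Sum>j<m. A *v ((matpow A (m - Suc j) ** B) *v u j)) + B *v u m"
    using Suc by (simp add: matrix_vector_right_distrib vec.sum)
  also have "(\<Sum>j<m. A *v ((matpow A (m - Suc j) ** B) *v u j)) = (\<Sum>j<m. (matpow A (Suc m - Suc j) ** B) *v u j)"
    by (rule sum.cong) (auto simp: e Suc_diff_Suc)
  finally show ?case by (simp add: matrix_vector_mul_assoc)
qed

lemma span_repr:
  fixes M :: "nat \<Rightarrow> real^'m^'n"
  assumes "y \<in> span (\<Union>k\<in>{..<n}. columns (M k))"
  shows "\<exists>w. y = (\<Sum>k<n. M k *v w k)"
proof -
  let ?P = "\<lambda>y. \<exists>w. y = (\<Sum>k<n. M k *v w k)"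
  have sub: "subspace (Collect ?P)"
    unfolding subspace_def
  proof (intro conjI ballI allI)
    show "0 \<in> Collect ?P" by (auto intro!: exI[of _ "\<lambda>_. 0"])
  next
    fix a b assume "a \<in> Collect ?P" "b \<in> Collect ?P"
    then obtain w1 w2 where "a = (\<Sum>k<n. M k *v w1 k)" "b = (\<Sum>k<n. M k *v w2 k)" by auto
    then have "a + b = (\<Sum>k<n. M k *v (w1 k + w2 k))"
      by (simp add: matrix_vector_right_distrib sum.distrib)
    then show "a + b \<in> Collect ?P" unfolding mem_Collect_eq by (rule exI[of _ "\<lambda>k. w1 k + w2 k"])
  next
    fix c :: real and a assume "a \<in> Collect ?P"
    then obtain w1 where "a = (\<Sum>k<n. M k *v w1 k)" by auto
    then have "c *\<^sub>R a = (\<Sum>k<n. M k *v (c *\<^sub>R w1 k))"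
      by (simp add: matrix_vector_mult_scaleR scaleR_sum_right)
    then show "c *\<^sub>R a \<in> Collect ?P" unfolding mem_Collect_eq by (rule exI[of _ "\<lambda>k. c *\<^sub>R w1 k"])
  qed
  have "?P z" if zin: "z \<in> (\<Union>k\<in>{..<n}. columns (M k))" for z
  proof -
    obtain k i where k: "k < n" and z: "z = column i (M k)"
      using zin unfolding columns_def by auto
    have "(\<Sum>k'<n. M k' *v (if k' = k then axis i 1 else 0)) = (\<Sum>k'<n. if k' = k then M k *v axis i 1 else 0)"
      by (rule sum.cong) auto
    also have "\<dots> = M k *v axis i 1" using k by simp
    finally show ?thesis using z by (metis matrix_vector_mult_basis)
  qed
  then show ?thesis using span_induct[OF assms sub] by blast
qed

lemma reach:
  fixes A :: "real^'n^'n" and B :: "real^'m^'n"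
  assumes "controllable A B"
  shows "\<exists>u. traj A B x u CARD('n) = 0"
proof -
  let ?n = "CARD('n)"
  have sp: "- (matpow A ?n *v x) \<in> span (\<Union>k\<in>{..<?n}. columns (matpow A k ** B))"
    using assms unfolding controllable_def by simp
  obtain w where w: "- (matpow A ?n *v x) = (\<Sum>k<?n. (matpow A k ** B) *v w k)"
    using span_repr[OF sp] by blast
  define u where "u j = w (?n - Suc j)" for j
  have "(\<Sum>j<?n. (matpow A (?n - Suc j) ** B) *v u j) = (\<Sum>k<?n. (matpow A k ** B) *v w k)"
    unfolding u_def by (rule sum.nat_diff_reindex)
  then have "traj A B x u ?n = 0" using w by (simp add: traj_formula) (metis add.right_inverse)
  then show ?thesis by blast
qed

lemma traj_bound:
  fixes A :: "real^'n^'n" and B :: "real^'m^'n"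
  assumes rs: "\<forall>k. ricsetup (Ps k) Q R" and P0: "Ps 0 = 0"
    and PS: "\<forall>k. Ps (Suc k) = riccati A B Q R (Ps k)" and pQ: "\<forall>x. 0 \<le> x \<bullet> (Q *v x)"
  shows "traj A B x u m = 0 \<Longrightarrow> x \<bullet> (Ps k *v x) \<le> (\<Sum>j<m. traj A B x u j \<bullet> (Q *v traj A B x u j) + u j \<bullet> (R *v u j))"
proof (induction m arbitrary: x u k)
  case 0 then show ?case by simp
next
  case (Suc m)
  have pR: "0 \<le> v \<bullet> (R *v v)" for v using pd_nonneg ricsetup.pR[OF rs[rule_format, of 0]] by blast
  show ?case
  proof (cases k)
    case 0
    then show ?thesis using P0 by (auto intro!: sum_nonneg add_nonneg_nonneg pQ[rule_format] pR)
  next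
    case (Suc k')
    define y where "y = A *v x + B *v u 0"
    have t: "traj A B y (\<lambda>i. u (Suc i)) m = 0" using Suc.prems traj_shift y_def by metis
    have "x \<bullet> (Ps k *v x) \<le> x \<bullet> (Q *v x) + u 0 \<bullet> (R *v u 0) + y \<bullet> (Ps k' *v y)"
      using ricsetup.ric_le[OF rs[rule_format, of k']] PS Suc y_def by metis
    also have "y \<bullet> (Ps k' *v y) \<le> (\<Sum>j<m. traj A B y (\<lambda>i. u (Suc i)) j \<bullet> (Q *v traj A B y (\<lambda>i. u (Suc i)) j) + u (Suc j) \<bullet> (R *v u (Suc j)))"
      using Suc.IH[OF t] by blast
    also have "\<dots> = (\<Sum>j<m. traj A B x u (Suc j) \<bullet> (Q *v traj A B x u (Suc j)) + u (Suc j) \<bullet> (R *v u (Suc j)))"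
      by (simp only: traj_shift y_def)
    finally show ?thesis by (simp add: sum.lessThan_Suc_shift del: sum.lessThan_Suc traj.simps(2))
  qed
qed

lemma onesided:
  fixes A :: "real^'n^'n" and B :: "real^'m^'n"
  assumes s1: "ricsetup P1 Q R" and s2: "ricsetup P2 Q R"
    and f1: "riccati A B Q R P1 = P1" and f2: "riccati A B Q R P2 = P2"
    and q: "0 < q" and Qq: "\<forall>x. q * (norm x)^2 \<le> x \<bullet> (Q *v x)"
  shows "x \<bullet> (P1 *v x) \<le> x \<bullet> (P2 *v x)"
proof -
  have "\<forall>y. \<exists>u. y \<bullet> (P2 *v y) = y \<bullet> (Q *v y) + u \<bullet> (R *v u) + (A *v y + B *v u) \<bullet> (P2 *v (A *v y + B *v u))"
    using ricsetup.ric_ex[OF s2, where A=A and B=B] f2 by metis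
  from choice[OF this] obtain uf where uf: "\<forall>y. y \<bullet> (P2 *v y) = y \<bullet> (Q *v y) + uf y \<bullet> (R *v uf y) + (A *v y + B *v uf y) \<bullet> (P2 *v (A *v y + B *v uf y))"
    by blast
  define g where "g y = A *v y + B *v uf y" for y
  define V where "V y = y \<bullet> (P2 *v y)" for y
  define D where "D y = y \<bullet> (P1 *v y) - y \<bullet> (P2 *v y)" for y
  have pR: "0 \<le> u \<bullet> (R *v u)" for u using pd_nonneg ricsetup.pR[OF s2] by blast
  have Vnn: "0 \<le> V y" for y using ricsetup.pP[OF s2] V_def by simp
  have a: "V (g y) \<le> V y - q * (norm y)^2" for y
    using uf[rule_format, of y] Qq pR[of "uf y"] unfolding V_def g_def by (smt (verit))
  have b: "D y \<le> D (g y)" for y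
  proof -
    have "y \<bullet> (P1 *v y) \<le> y \<bullet> (Q *v y) + uf y \<bullet> (R *v uf y) + (g y) \<bullet> (P1 *v g y)"
      using ricsetup.ric_le[OF s1, where x=y and u="uf y" and A=A and B=B] f1 g_def by simp
    then show ?thesis using uf[rule_format, of y] unfolding D_def g_def by simp
  qed
  have c: "q * (norm y)^2 \<le> V y" for y using a[of y] Vnn[of "g y"] by simp
  define c0 where "c0 = (\<Sum>i\<in>UNIV. \<Sum>j\<in>UNIV. \<bar>P2$i$j\<bar>)"
  define c' where "c' = max c0 q"
  have c'pos: "0 < c'" "q \<le> c'" using q c'_def by auto
  have d: "V y \<le> c' * (norm y)^2" for y
  proof -
    have "V y \<le> c0 * norm y * norm y" using abs_bound[of y P2 y] unfolding V_def c0_def by simp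
    also have "\<dots> \<le> c' * (norm y)^2" unfolding c'_def power2_eq_square mult.assoc by (intro mult_right_mono) auto
    finally show ?thesis .
  qed
  define \<rho> where "\<rho> = 1 - q / c'"
  have \<rho>: "0 \<le> \<rho>" "\<rho> < 1" using c'pos q by (auto simp: \<rho>_def field_simps)
  have e: "V (g y) \<le> \<rho> * V y" for y
  proof -
    have "(q / c') * V y \<le> (q / c') * (c' * (norm y)^2)" using d[of y] q c'pos by (intro mult_left_mono) auto
    also have "\<dots> = q * (norm y)^2" using c'pos by simp
    finally show ?thesis using a[of y] unfolding \<rho>_def by (simp add: algebra_simps)
  qed
  have f: "V ((g^^k) x) \<le> \<rho>^k * V x \<and> D x \<le> D ((g^^k) x)" for k
  proof (induction k)
    case 0 then show ?case by simp
  next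
    case (Suc k)
    have "V ((g^^Suc k) x) \<le> \<rho> * V ((g^^k) x)" using e by simp
    also have "\<dots> \<le> \<rho> * (\<rho>^k * V x)" using Suc \<rho> by (intro mult_left_mono) auto
    finally have 1: "V ((g^^Suc k) x) \<le> \<rho>^Suc k * V x" by simp
    have "D x \<le> D ((g^^Suc k) x)" using Suc b[of "(g^^k) x"] by simp
    then show ?case using 1 by simp
  qed
  define d0 where "d0 = (\<Sum>i\<in>UNIV. \<Sum>j\<in>UNIV. \<bar>P1$i$j\<bar>) + c0"
  have dD: "D y \<le> d0 * (norm y)^2" for y
  proof -
    have "\<bar>y \<bullet> (P1 *v y)\<bar> \<le> (\<Sum>i\<in>UNIV. \<Sum>j\<in>UNIV. \<bar>P1$i$j\<bar>) * norm y * norm y" by (rule abs_bound)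
    moreover have "\<bar>y \<bullet> (P2 *v y)\<bar> \<le> c0 * norm y * norm y" unfolding c0_def by (rule abs_bound)
    ultimately show ?thesis unfolding D_def d0_def by (simp add: power2_eq_square algebra_simps)
  qed
  have d0nn: "0 \<le> d0" unfolding d0_def c0_def by (intro add_nonneg_nonneg sum_nonneg) auto
  define K where "K = d0 / q * V x"
  have Knn: "0 \<le> K" using d0nn q Vnn unfolding K_def by simp
  have bnd: "D x \<le> K * \<rho>^k" for k
  proof -
    let ?y = "(g^^k) x"
    have "D x \<le> D ?y" using f by blast
    also have "\<dots> \<le> d0 * (norm ?y)^2" by (rule dD)
    also have "\<dots> \<le> d0 * (V ?y / q)" using c[of ?y] q d0nn by (intro mult_left_mono) (auto simp: field_simps)
    also have "\<dots> \<le> d0 * (\<rho>^k * V x / q)" using f[of k] q d0nn by (intro mult_left_mono divide_right_mono) auto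
    also have "\<dots> = K * \<rho>^k" unfolding K_def by simp
    finally show ?thesis .
  qed
  have "D x \<le> 0"
  proof (rule ccontr)
    assume "\<not> D x \<le> 0"
    then have pos: "0 < D x / (K + 1)" using Knn by simp
    obtain k where k: "\<rho>^k < D x / (K + 1)" using real_arch_pow_inv[OF pos \<rho>(2)] by blast
    have "K * \<rho>^k \<le> (K + 1) * \<rho>^k" using \<rho> by (simp add: algebra_simps)
    also have "\<dots> < (K + 1) * (D x / (K + 1))" using k Knn by (intro mult_strict_left_mono) auto
    also have "\<dots> = D x" using Knn by simp
    finally show False using bnd[of k] by simp
  qed
  then show ?thesis unfolding D_def by simp
qed

lemma unique_fix:
  fixes A :: "real^'n^'n" and B :: "real^'m^'n"
  assumes s1: "ricsetup P1 Q R" and s2: "ricsetup P2 Q R"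
    and f1: "riccati A B Q R P1 = P1" and f2: "riccati A B Q R P2 = P2"
    and q: "0 < q" and Qq: "\<forall>x. q * (norm x)^2 \<le> x \<bullet> (Q *v x)"
  shows "P1 = P2"
proof (rule quad_eq_imp_eq)
  show "transpose P1 = P1" "transpose P2 = P2" using ricsetup.sP s1 s2 by auto
  show "\<forall>x. x \<bullet> (P1 *v x) = x \<bullet> (P2 *v x)"
    using onesided[OF s1 s2 f1 f2 q Qq] onesided[OF s2 s1 f2 f1 q Qq] by (meson order_antisym)
qed

lemma transpose_sI: "transpose (c *\<^sub>R mat 1 :: real^'n^'n) = c *\<^sub>R mat 1"
  by (simp add: transpose_scalar transpose_mat)

lemma axis_entry: "axis i 1 \<bullet> ((M::real^'n^'n) *v axis j 1) = M$i$j"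
  by (simp add: inner_axis' matrix_vector_mult_basis column_def)

lemma entry_polar:
  fixes M :: "real^'n^'n"
  assumes "transpose M = M"
  shows "M$i$j = ((axis i 1 + axis j 1) \<bullet> (M *v (axis i 1 + axis j 1)) - axis i 1 \<bullet> (M *v axis i 1) - axis j 1 \<bullet> (M *v axis j 1)) / 2"
proof -
  have "axis j 1 \<bullet> (M *v axis i 1) = axis i 1 \<bullet> (M *v axis j 1)" by (rule inner_mv_sym[OF assms])
  then show ?thesis
    by (simp add: matrix_vector_right_distrib inner_add_left inner_add_right axis_entry)
qed

lemma quad_sum: "x \<bullet> ((M::real^'n^'n) *v x) = (\<Sum>i\<in>UNIV. x$i * (\<Sum>j\<in>UNIV. M$i$j * x$j))"
  by (simp add: inner_vec_def matrix_vector_mult_def)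

lemma rs_intro:
  assumes "transpose P = P" "\<forall>x. 0 \<le> x \<bullet> (P *v x)" "0 < (r::real)"
  shows "ricsetup P (q *\<^sub>R mat 1) (r *\<^sub>R mat 1)"
  using assms by (unfold_locales) (auto simp: transpose_sI quad_scaled_id)

lemma exist_fix:
  fixes A :: "real^'n^'n" and B :: "real^'m^'n"
  assumes ctrl: "controllable A B" and q: "0 < q" and r: "0 < r"
  defines "Q \<equiv> q *\<^sub>R mat 1 :: real^'n^'n" and "R \<equiv> r *\<^sub>R mat 1 :: real^'m^'m"
  shows "\<exists>P. pos_def P \<and> P = riccati A B Q R P"
proof -
  define F where "F = riccati A B Q R"
  define Ps where "Ps k = (F ^^ k) 0" for k
  have Ps0: "Ps 0 = 0" and PsS: "Ps (Suc k) = F (Ps k)" for k by (simp_all add: Ps_def)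
  have Qq: "x \<bullet> (Q *v x) = q * (norm x)^2" for x unfolding Q_def by (rule quad_scaled_id)
  have rsI: "ricsetup P Q R" if "transpose P = P" "\<forall>x. 0 \<le> x \<bullet> (P *v x)" for P
    unfolding Q_def R_def using rs_intro[OF that r] .
  have rs: "ricsetup (Ps k) Q R" for k
  proof (induction k)
    case 0 show ?case by (rule rsI) (auto simp: Ps0 transpose_def vec_eq_iff)
  next
    case (Suc k)
    show ?case
    proof (rule rsI)
      show "transpose (Ps (Suc k)) = Ps (Suc k)" using ricsetup.ric_sym[OF Suc] PsS F_def by simp
      show "\<forall>x. 0 \<le> x \<bullet> (Ps (Suc k) *v x)"
        using ricsetup.ric_ge_Q[OF Suc] PsS F_def Qq q
        by (metis mult_nonneg_nonneg order_trans less_imp_le zero_le_power2)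
    qed
  qed
  have mono: "x \<bullet> (Ps k *v x) \<le> x \<bullet> (Ps (Suc k) *v x)" for k x
  proof (induction k arbitrary: x)
    case 0 show ?case using ricsetup.pP[OF rs[of 1]] by (simp add: Ps0)
  next
    case (Suc k)
    show ?case using ric_mono[OF rs[of k] rs[of "Suc k"], where x=x and A=A and B=B] Suc
      by (simp add: PsS F_def)
  qed
  have bounded: "\<exists>J. \<forall>k. x \<bullet> (Ps k *v x) \<le> J" for x
  proof -
    obtain u where u: "traj A B x u CARD('n) = 0" using reach[OF ctrl] by blast
    have "\<forall>x. 0 \<le> x \<bullet> (Q *v x)" using Qq q by simp
    then show ?thesis
      using traj_bound[where Ps=Ps and A=A and B=B and Q=Q and R=R, OF allI[OF rs] Ps0 _ _ u]
        PsS F_def by blast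
  qed
  define lq where "lq x = lim (\<lambda>k. x \<bullet> (Ps k *v x))" for x
  have conv: "(\<lambda>k. x \<bullet> (Ps k *v x)) \<longlonglongrightarrow> lq x" for x
  proof -
    obtain J where J: "\<forall>k. x \<bullet> (Ps k *v x) \<le> J" using bounded by blast
    have "incseq (\<lambda>k. x \<bullet> (Ps k *v x))" using mono by (simp add: incseq_SucI)
    then obtain L where "(\<lambda>k. x \<bullet> (Ps k *v x)) \<longlonglongrightarrow> L" using incseq_convergent[OF _ J] by blast
    then show ?thesis unfolding lq_def by (simp add: limI)
  qed
  have inc: "incseq (\<lambda>k. x \<bullet> (Ps k *v x))" for x using mono by (simp add: incseq_SucI)
  define Pst :: "real^'n^'n" where "Pst = (\<chi> i j. (lq (axis i 1 + axis j 1) - lq (axis i 1) - lq (axis j 1)) / 2)"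
  have entry: "(\<lambda>k. Ps k $ i $ j) \<longlonglongrightarrow> Pst $ i $ j" for i j
  proof -
    have lim: "(\<lambda>k. ((axis i 1 + axis j 1) \<bullet> (Ps k *v (axis i 1 + axis j 1)) - axis i 1 \<bullet> (Ps k *v axis i 1) - axis j 1 \<bullet> (Ps k *v axis j 1)) / 2)
        \<longlonglongrightarrow> (lq (axis i 1 + axis j 1) - lq (axis i 1) - lq (axis j 1)) / 2"
      by (intro tendsto_intros conv) simp
    have eq: "(\<lambda>k. Ps k $ i $ j) = (\<lambda>k. ((axis i 1 + axis j 1) \<bullet> (Ps k *v (axis i 1 + axis j 1)) - axis i 1 \<bullet> (Ps k *v axis i 1) - axis j 1 \<bullet> (Ps k *v axis j 1)) / 2)"
      by (rule ext, rule entry_polar[OF ricsetup.sP[OF rs]])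
    have pe: "Pst $ i $ j = (lq (axis i 1 + axis j 1) - lq (axis i 1) - lq (axis j 1)) / 2"
      unfolding Pst_def by simp
    show ?thesis unfolding pe eq by (rule lim)
  qed
  have convq: "(\<lambda>k. x \<bullet> (Ps k *v x)) \<longlonglongrightarrow> x \<bullet> (Pst *v x)" for x
    unfolding quad_sum by (intro tendsto_intros entry)
  have sPst: "transpose Pst = Pst"
    unfolding Pst_def transpose_def by (simp add: vec_eq_iff add.commute)
  have le_Pst: "x \<bullet> (Ps k *v x) \<le> x \<bullet> (Pst *v x)" for k x
    using incseq_le[OF inc convq] .
  have pPst: "\<forall>x. 0 \<le> x \<bullet> (Pst *v x)"
    using le_Pst ricsetup.pP[OF rs] by (meson order_trans)
  have rsst: "ricsetup Pst Q R" by (rule rsI[OF sPst pPst])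
  have ge: "x \<bullet> (Pst *v x) \<le> x \<bullet> (F Pst *v x)" for x
  proof -
    have "(\<lambda>k. x \<bullet> (Ps (Suc k) *v x)) \<longlonglongrightarrow> x \<bullet> (Pst *v x)" using convq LIMSEQ_Suc by blast
    moreover have "x \<bullet> (Ps (Suc k) *v x) \<le> x \<bullet> (F Pst *v x)" for k
      using ric_mono[OF rs[of k] rsst, where x=x and A=A and B=B] le_Pst PsS F_def by simp
    ultimately show ?thesis by (intro LIMSEQ_le_const2) auto
  qed
  have le: "x \<bullet> (F Pst *v x) \<le> x \<bullet> (Pst *v x)" for x
  proof -
    have "\<forall>k. \<exists>u. x \<bullet> (F (Ps k) *v x) = x \<bullet> (Q *v x) + u \<bullet> (R *v u) + (A *v x + B *v u) \<bullet> (Ps k *v (A *v x + B *v u))"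
      using ricsetup.ric_ex[OF rs, where A=A and B=B] F_def by blast
    from choice[OF this] obtain uk where uk: "\<forall>k. x \<bullet> (F (Ps k) *v x) = x \<bullet> (Q *v x) + uk k \<bullet> (R *v uk k) + (A *v x + B *v uk k) \<bullet> (Ps k *v (A *v x + B *v uk k))"
      by blast
    define W where "W = x \<bullet> (Pst *v x)"
    define yk where "yk k = A *v x + B *v uk k" for k
    define U where "U = sqrt (W / r)"
    define SB where "SB = (\<Sum>i\<in>UNIV. \<Sum>j\<in>UNIV. \<bar>B$i$j\<bar>)"
    define Y where "Y = norm (A *v x) + SB * U"
    define S where "S k = (\<Sum>i\<in>UNIV. \<Sum>j\<in>UNIV. \<bar>(Pst - Ps k)$i$j\<bar>)" for k
    have Rq: "u \<bullet> (R *v u) = r * (norm u)^2" for u unfolding R_def by (rule quad_scaled_id)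
    have Uk: "norm (uk k) \<le> U" for k
    proof -
      have "r * (norm (uk k))^2 \<le> x \<bullet> (F (Ps k) *v x)"
        using uk[rule_format, of k] Rq[of "uk k"] Qq[of x] q ricsetup.pP[OF rs[of k]]
        by (smt (verit) mult_nonneg_nonneg zero_le_power2)
      also have "\<dots> \<le> W" using le_Pst[of x "Suc k"] PsS W_def by simp
      finally have "(norm (uk k))^2 \<le> W / r" using r by (simp add: field_simps mult.commute)
      then show ?thesis unfolding U_def by (metis norm_ge_zero real_le_rsqrt)
    qed
    have Yk: "norm (yk k) \<le> Y" for k
    proof -
      have "norm (yk k) \<le> norm (A *v x) + norm (B *v uk k)" unfolding yk_def by (rule norm_triangle_ineq)
      also have "norm (B *v uk k) \<le> SB * norm (uk k)" unfolding SB_def by (rule norm_mv_bound)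
      also have "SB * norm (uk k) \<le> SB * U" using Uk[of k] by (intro mult_left_mono) (auto simp: SB_def sum_nonneg)
      finally show ?thesis unfolding Y_def by simp
    qed
    have Snn: "0 \<le> S k" for k unfolding S_def by (intro sum_nonneg) auto
    have step: "x \<bullet> (F Pst *v x) \<le> W + S k * Y^2" for k
    proof -
      have "x \<bullet> (F Pst *v x) \<le> x \<bullet> (Q *v x) + uk k \<bullet> (R *v uk k) + yk k \<bullet> (Pst *v yk k)"
        using ricsetup.ric_le[OF rsst, where x=x and u="uk k" and A=A and B=B] F_def yk_def by simp
      also have "yk k \<bullet> (Pst *v yk k) = yk k \<bullet> (Ps k *v yk k) + yk k \<bullet> ((Pst - Ps k) *v yk k)"
        by (simp add: matrix_vector_mult_diff_rdistrib inner_diff_right)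
      also have "yk k \<bullet> ((Pst - Ps k) *v yk k) \<le> S k * norm (yk k) * norm (yk k)"
        using abs_bound[of "yk k" "Pst - Ps k" "yk k"] unfolding S_def by simp
      also have "S k * norm (yk k) * norm (yk k) \<le> S k * Y^2"
        unfolding power2_eq_square mult.assoc using Yk[of k] Snn[of k]
        by (intro mult_left_mono mult_mono) (auto intro: order_trans[OF norm_ge_zero])
      finally have "x \<bullet> (F Pst *v x) \<le> x \<bullet> (F (Ps k) *v x) + S k * Y^2"
        using uk[rule_format, of k] yk_def by simp
      also have "x \<bullet> (F (Ps k) *v x) \<le> W" using le_Pst[of x "Suc k"] PsS W_def by simp
      finally show ?thesis by simp
    qed
    have "S \<longlonglongrightarrow> (\<Sum>i\<in>UNIV. \<Sum>j\<in>UNIV. \<bar>Pst$i$j - Pst$i$j\<bar>)"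
      unfolding S_def by (simp only: vector_minus_component) (intro tendsto_intros entry)
    then have "S \<longlonglongrightarrow> 0" by simp
    then have "(\<lambda>k. W + S k * Y^2) \<longlonglongrightarrow> W + 0 * Y^2" by (intro tendsto_intros)
    then have "x \<bullet> (F Pst *v x) \<le> W" using step by (intro LIMSEQ_le_const) auto
    then show ?thesis unfolding W_def .
  qed
  have fixP: "F Pst = Pst"
    using quad_eq_imp_eq[OF ricsetup.ric_sym[OF rsst] sPst] ge le F_def by (meson order_antisym)
  have "pos_def Pst"
    unfolding pos_def_def
  proof (intro conjI allI impI sPst)
    fix x :: "real^'n" assume "x \<noteq> 0"
    have "q * (norm x)^2 \<le> x \<bullet> (Pst *v x)"
      using ricsetup.ric_ge_Q[OF rsst, where x=x and A=A and B=B] fixP F_def Qq by simp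
    moreover have "0 < q * (norm x)^2" using q \<open>x \<noteq> 0\<close> by simp
    ultimately show "0 < x \<bullet> (Pst *v x)" by linarith
  qed
  then show ?thesis using fixP F_def by metis
qed

lemma dare_sol_props:
  fixes A :: "real^'n^'n" and B :: "real^'m^'n"
  assumes ctrl: "controllable A B" and q: "0 < q" and r: "0 < r"
  shows "pos_def (dare_sol A B (q *\<^sub>R mat 1) (r *\<^sub>R mat 1))"
    "riccati A B (q *\<^sub>R mat 1) (r *\<^sub>R mat 1) (dare_sol A B (q *\<^sub>R mat 1) (r *\<^sub>R mat 1)) = dare_sol A B (q *\<^sub>R mat 1) (r *\<^sub>R mat 1)"
proof -
  let ?Q = "q *\<^sub>R mat 1 :: real^'n^'n" and ?R = "r *\<^sub>R mat 1 :: real^'m^'m"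
  obtain P where P: "pos_def P \<and> P = riccati A B ?Q ?R P" using exist_fix[OF ctrl q r] by blast
  have rs: "ricsetup X ?Q ?R" if "pos_def X" for X
    using that unfolding pos_def_def by (intro rs_intro[OF _ _ r]) (auto intro: pd_nonneg)
  have Qq: "\<forall>x. q * (norm x)^2 \<le> x \<bullet> (?Q *v x)" by (simp add: quad_scaled_id)
  have "dare_sol A B ?Q ?R = P"
    unfolding dare_sol_def
  proof (rule the_equality)
    show "pos_def P \<and> P = riccati A B ?Q ?R P" by (rule P)
    fix X assume X: "pos_def X \<and> X = riccati A B ?Q ?R X"
    show "X = P"
      by (rule unique_fix[where A=A and B=B, OF rs rs _ _ q Qq]) (use X P in auto)
  qed
  then show "pos_def (dare_sol A B ?Q ?R)" "riccati A B ?Q ?R (dare_sol A B ?Q ?R) = dare_sol A B ?Q ?R"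
    using P by auto
qed

lemma sym_upper: "transpose X = X \<Longrightarrow> loewner_le X (Y::real^'n^'n) \<Longrightarrow> transpose Y = Y"
  unfolding loewner_le_def psd_def
proof -
  assume x: "transpose X = X" and h: "transpose (Y - X) = Y - X \<and> (\<forall>x. 0 \<le> x \<bullet> ((Y - X) *v x))"
  have "transpose Y = transpose ((Y - X) + X)" by simp
  also have "\<dots> = (Y - X) + X" unfolding transpose_add' using x h by simp
  finally show ?thesis by simp
qed

lemma sym_lower: "transpose Y = Y \<Longrightarrow> loewner_le X (Y::real^'n^'n) \<Longrightarrow> transpose X = X"
  unfolding loewner_le_def psd_def
proof -
  assume y: "transpose Y = Y" and h: "transpose (Y - X) = Y - X \<and> (\<forall>x. 0 \<le> x \<bullet> ((Y - X) *v x))"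
  have "transpose X = transpose (Y - (Y - X))" by simp
  also have "\<dots> = Y - (Y - X)" by (simp only: transpose_diff'[of Y "Y - X"] y h[THEN conjunct1])
  finally show ?thesis by simp
qed

lemma loewner_intro: "transpose X = X \<Longrightarrow> transpose Y = Y \<Longrightarrow> (\<forall>x. x \<bullet> (X *v x) \<le> x \<bullet> (Y *v x)) \<Longrightarrow> loewner_le X (Y::real^'n^'n)"
  unfolding loewner_iff by (simp add: transpose_diff')

lemma loewner_quad: "loewner_le X Y \<Longrightarrow> x \<bullet> (X *v x) \<le> x \<bullet> (Y *v x)"
  unfolding loewner_iff by blast

theorem lemma13:
  fixes A :: "real^'n^'n" and B :: "real^'m^'n"
    and muf lf mug lg :: real and N :: nat
    and Qs :: "nat \<Rightarrow> real^'n^'n" and Rs :: "nat \<Rightarrow> real^'m^'m"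
    and P :: "nat \<Rightarrow> real^'n^'n"
  assumes "0 < muf" and "0 < mug" and "0 < lf" and "0 < lg"
    and "controllable A B"
    and "\<forall>t<N. Qs t \<in> Qset muf lf"
    and "\<forall>t<N. Rs t \<in> Rset mug lg"
    and "Qs N \<in> Pset A B muf lf mug lg"
    and "P N = Qs N"
    and "\<forall>t<N. P t = riccati A B (Qs t) (Rs t) (P (Suc t))"
  shows "\<forall>t\<le>N. P t \<in> Pset A B muf lf mug lg"
proof -
  let ?mQ = "muf *\<^sub>R mat 1 :: real^'n^'n" and ?mR = "mug *\<^sub>R mat 1 :: real^'m^'m"
  let ?lQ = "lf *\<^sub>R mat 1 :: real^'n^'n" and ?lR = "lg *\<^sub>R mat 1 :: real^'m^'m"
  let ?L = "dare_sol A B ?mQ ?mR" and ?U = "dare_sol A B ?lQ ?lR"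
  note Lp = dare_sol_props[OF assms(5) assms(1) assms(2)]
  note Up = dare_sol_props[OF assms(5) assms(3) assms(4)]
  have rsL: "ricsetup ?L ?mQ ?mR"
    using Lp(1) unfolding pos_def_def by (intro rs_intro[OF _ _ assms(2)]) (auto intro: pd_nonneg)
  have rsU: "ricsetup ?U ?lQ ?lR"
    using Up(1) unfolding pos_def_def by (intro rs_intro[OF _ _ assms(4)]) (auto intro: pd_nonneg)
  have sL: "transpose ?L = ?L" and sU: "transpose ?U = ?U" using ricsetup.sP[OF rsL] ricsetup.sP[OF rsU] by auto
  have step: "P t \<in> Pset A B muf lf mug lg" if Pin: "P (Suc t) \<in> Pset A B muf lf mug lg" and t: "t < N" for t
  proof -
    have q1: "loewner_le ?mQ (Qs t)" and q2: "loewner_le (Qs t) ?lQ"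
      using assms(6) t unfolding Qset_def by auto
    have r1: "loewner_le ?mR (Rs t)" and r2: "loewner_le (Rs t) ?lR"
      using assms(7) t unfolding Rset_def by auto
    have p1: "loewner_le ?L (P (Suc t))" and p2: "loewner_le (P (Suc t)) ?U"
      using Pin unfolding Pset_def by auto
    have sQ: "transpose (Qs t) = Qs t" using sym_upper[OF transpose_sI q1] .
    have sR: "transpose (Rs t) = Rs t" using sym_upper[OF transpose_sI r1] .
    have sP: "transpose (P (Suc t)) = P (Suc t)" using sym_upper[OF sL p1] .
    have pR: "\<forall>u. u \<noteq> 0 \<longrightarrow> 0 < u \<bullet> (Rs t *v u)"
    proof (intro allI impI)
      fix u :: "real^'m" assume "u \<noteq> 0"
      then have "0 < mug * (norm u)^2" using assms(2) by simp
      also have "\<dots> = u \<bullet> (?mR *v u)" by (simp add: quad_scaled_id)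
      also have "\<dots> \<le> u \<bullet> (Rs t *v u)" by (rule loewner_quad[OF r1])
      finally show "0 < u \<bullet> (Rs t *v u)" .
    qed
    have pP: "\<forall>x. 0 \<le> x \<bullet> (P (Suc t) *v x)"
      using loewner_quad[OF p1] ricsetup.pP[OF rsL] by (meson order_trans)
    have rsP: "ricsetup (P (Suc t)) (Qs t) (Rs t)"
      by unfold_locales (use sQ sR sP pR pP in auto)
    have Pt: "P t = riccati A B (Qs t) (Rs t) (P (Suc t))" using assms(10) t by auto
    have sPt: "transpose (P t) = P t" using ricsetup.ric_sym[OF rsP] Pt by simp
    have lo: "x \<bullet> (?L *v x) \<le> x \<bullet> (P t *v x)" for x
      using ric_mono[OF rsL rsP, where x=x and A=A and B=B] Lp(2) Pt
        loewner_quad[OF q1] loewner_quad[OF r1] loewner_quad[OF p1] by simp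
    have up: "x \<bullet> (P t *v x) \<le> x \<bullet> (?U *v x)" for x
      using ric_mono[OF rsP rsU, where x=x and A=A and B=B] Up(2) Pt
        loewner_quad[OF q2] loewner_quad[OF r2] loewner_quad[OF p2] by simp
    show ?thesis unfolding Pset_def
      using loewner_intro[OF sL sPt] loewner_intro[OF sPt sU] lo up by auto
  qed
  have "\<forall>i. i \<le> N \<longrightarrow> P (N - i) \<in> Pset A B muf lf mug lg"
  proof (intro allI)
    fix i show "i \<le> N \<longrightarrow> P (N - i) \<in> Pset A B muf lf mug lg"
    proof (induction i)
      case 0 then show ?case using assms(8,9) by simp
    next
      case (Suc i)
      show ?case
      proof
        assume "Suc i \<le> N"
        then have "P (Suc (N - Suc i)) \<in> Pset A B muf lf mug lg" using Suc by (simp add: Suc_diff_Suc)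
        then show "P (N - Suc i) \<in> Pset A B muf lf mug lg" using step \<open>Suc i \<le> N\<close> by simp
      qed
    qed
  qed
  then show ?thesis
  proof (intro allI impI)
    fix t assume "t \<le> N" and H: "\<forall>i. i \<le> N \<longrightarrow> P (N - i) \<in> Pset A B muf lf mug lg"
    then show "P t \<in> Pset A B muf lf mug lg" using H[rule_format, of "N - t"] by simp
  qed
qed

end
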